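(* Let $\Delta\in(0,1]$ and consider the two-armed bandit problem with a single (dummy) context, with warm-start cost vector $c^s_0=(0.5,\ 0.5+\Delta/2)$ and interaction cost vector $c^b_0=(0.5,\ 0.5-\Delta/2)$ (both deterministic). Run the warm-started UCB algorithm described in the context with $n_s$ warm-start examples and $n_b$ interaction rounds, where $n_b\ge\exp(\Delta^2 n_s/16)$. Then its regret $\sum_{t=1}^{n_b}\big(c^b_0(a_t)-c^b_0(2)\big)$ is $\Omega\big(\Delta\exp(\Delta^2 n_s/16)\big)$.
   Context: Warm-started UCB algorithm: the input is a set $S$ of $n_s$ warm-start examples, each with cost vector $c^s_0$, and a number $n_b$ of interaction rounds. For $t=1,2,\dots,n_b$: for $i\in\{1,2\}$ let $n_{i,t-1}=\sum_{s=1}^{t-1}\mathbf{1}(a_s=i)$ be the number of earlier rounds in which action $i$ was taken; compute the empirical mean cost $\hat\mu_{i,t}=\frac{n_s c^s_0(i)+\sum_{s=1}^{t-1}\mathbf{1}(a_s=i)\,c^b_0(i)}{n_s+n_{i,t-1}}$ and the lower confidence bound $\mathrm{LCB}_{i,t}=\hat\mu_{i,t}-2\sqrt{\frac{\ln t}{n_s+n_{i,t-1}}}$; take action $a_t=\arg\min_{i\in\{1,2\}}\mathrm{LCB}_{i,t}$ and observe the cost $c^b_0(a_t)$. The optimal action for the interaction costs is action $2$. *)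

theory Defs
  imports Complex_Main
begin

text \<open>Warm-started UCB for two actions 1 and 2. A history is the list [a_1, ..., a_(t-1)]
of previously taken actions. ns = number of warm-start examples, cs = warm-start cost
vector, cb = interaction cost vector (both deterministic).\<close>

definition ucb_count :: "nat list \<Rightarrow> nat \<Rightarrow> nat" where
  "ucb_count hist i = length (filter (\<lambda>a. a = i) hist)"

definition ucb_mean :: "nat \<Rightarrow> (nat \<Rightarrow> real) \<Rightarrow> (nat \<Rightarrow> real) \<Rightarrow> nat list \<Rightarrow> nat \<Rightarrow> real" where
  "ucb_mean ns cs cb hist i =
     (real ns * cs i + (\<Sum>s<length hist. if hist ! s = i then cb i else 0))
     / (real ns + real (ucb_count hist i))"

definition ucb_lcb :: "nat \<Rightarrow> (nat \<Rightarrow> real) \<Rightarrow> (nat \<Rightarrow> real) \<Rightarrow> nat list \<Rightarrow> nat \<Rightarrow> nat \<Rightarrow> real" where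
  "ucb_lcb ns cs cb hist t i =
     ucb_mean ns cs cb hist i - 2 * sqrt (ln (real t) / (real ns + real (ucb_count hist i)))"

definition ucb_choose :: "nat \<Rightarrow> (nat \<Rightarrow> real) \<Rightarrow> (nat \<Rightarrow> real) \<Rightarrow> nat list \<Rightarrow> nat \<Rightarrow> nat" where
  "ucb_choose ns cs cb hist t =
     (if ucb_lcb ns cs cb hist t 1 \<le> ucb_lcb ns cs cb hist t 2 then 1 else 2)"

fun ucb_history :: "nat \<Rightarrow> (nat \<Rightarrow> real) \<Rightarrow> (nat \<Rightarrow> real) \<Rightarrow> nat \<Rightarrow> nat list" where
  "ucb_history ns cs cb 0 = []"
| "ucb_history ns cs cb (Suc t) =
     (let hist = ucb_history ns cs cb t in hist @ [ucb_choose ns cs cb hist (Suc t)])"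

text \<open>The action a_t taken at round t (t >= 1).\<close>
definition ucb_action :: "nat \<Rightarrow> (nat \<Rightarrow> real) \<Rightarrow> (nat \<Rightarrow> real) \<Rightarrow> nat \<Rightarrow> nat" where
  "ucb_action ns cs cb t = last (ucb_history ns cs cb t)"

definition ucb_regret :: "nat \<Rightarrow> (nat \<Rightarrow> real) \<Rightarrow> (nat \<Rightarrow> real) \<Rightarrow> nat \<Rightarrow> real" where
  "ucb_regret ns cs cb nb = (\<Sum>t=1..nb. cb (ucb_action ns cs cb t) - cb 2)"

end

theory Submission
  imports Defs
begin

lemma sum_rep:
  "(\<Sum>s<length (replicate t (1::nat)). if replicate t (1::nat) ! s = i then c else 0)
   = (if i = 1 then real t * c else 0)"
  by simp

lemma count_rep: "ucb_count (replicate t (1::nat)) i = (if i = 1 then t else 0)"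
  unfolding ucb_count_def by simp

lemma hist_ones:
  fixes \<Delta> :: real and ns :: nat
  defines "cs \<equiv> (\<lambda>i::nat. if i = 1 then 0.5 else 0.5 + \<Delta> / 2)"
  defines "cb \<equiv> (\<lambda>i::nat. if i = 1 then 0.5 else 0.5 - \<Delta> / 2)"
  assumes D: "0 < \<Delta>"
  shows "real t \<le> exp (\<Delta>\<^sup>2 * real ns / 16) \<Longrightarrow> ucb_history ns cs cb t = replicate t 1"
proof (induction t)
  case 0
  then show ?case by simp
next
  case (Suc t)
  have IH: "ucb_history ns cs cb t = replicate t 1" using Suc by simp
  let ?h = "replicate t (1::nat)"
  have ch: "ucb_choose ns cs cb ?h (Suc t) = 1"
  proof (cases "ns = 0")
    case True
    then have "real (Suc t) \<le> 1" using Suc.prems by simp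
    then have t0: "t = 0" by simp
    show ?thesis using True unfolding t0 ucb_choose_def ucb_lcb_def ucb_mean_def
      by (simp add: ucb_count_def)
  next
    case False
    then have nsp: "real ns > 0" by simp
    have m1: "ucb_mean ns cs cb ?h 1 = 0.5"
      unfolding ucb_mean_def count_rep sum_rep using nsp
      by (simp add: cs_def cb_def field_simps)
    have m2: "ucb_mean ns cs cb ?h 2 = 0.5 + \<Delta>/2"
      unfolding ucb_mean_def count_rep sum_rep using nsp
      by (simp add: cs_def cb_def field_simps)
    have lt: "ln (real (Suc t)) \<le> \<Delta>\<^sup>2 * real ns / 16"
      using Suc.prems by (metis exp_le_cancel_iff exp_ln of_nat_0_less_iff zero_less_Suc)
    have "ln (real (Suc t)) / real ns \<le> (\<Delta>/4)\<^sup>2"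
      using lt nsp by (simp add: field_simps power2_eq_square)
    then have "sqrt (ln (real (Suc t)) / real ns) \<le> \<Delta>/4"
      using D by (metis abs_of_pos divide_pos_pos real_sqrt_abs real_sqrt_le_mono zero_less_numeral)
    then have l2: "ucb_lcb ns cs cb ?h (Suc t) 2 \<ge> 0.5"
      unfolding ucb_lcb_def m2 count_rep by simp
    have "sqrt (ln (real (Suc t)) / (real ns + real t)) \<ge> 0" by simp
    then have l1: "ucb_lcb ns cs cb ?h (Suc t) 1 \<le> 0.5"
      unfolding ucb_lcb_def m1 count_rep by simp
    show ?thesis using l1 l2 unfolding ucb_choose_def by simp
  qed
  show ?case using IH ch by (simp add: Let_def replicate_append_same)
qed

theorem mainTheorem2:
  "\<exists>C>0. \<forall>(\<Delta>::real) (ns::nat) (nb::nat).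
     0 < \<Delta> \<and> \<Delta> \<le> 1 \<and> real nb \<ge> exp (\<Delta>\<^sup>2 * real ns / 16) \<longrightarrow>
     ucb_regret ns (\<lambda>i. if i = 1 then 0.5 else 0.5 + \<Delta> / 2)
                   (\<lambda>i. if i = 1 then 0.5 else 0.5 - \<Delta> / 2) nb
       \<ge> C * \<Delta> * exp (\<Delta>\<^sup>2 * real ns / 16)"
proof (intro exI[of _ "1/4"] conjI allI impI)
  fix \<Delta> :: real and ns nb :: nat
  assume A: "0 < \<Delta> \<and> \<Delta> \<le> 1 \<and> real nb \<ge> exp (\<Delta>\<^sup>2 * real ns / 16)"
  define cs where "cs \<equiv> (\<lambda>i::nat. if i = 1 then (0.5::real) else 0.5 + \<Delta> / 2)"
  define cb where "cb \<equiv> (\<lambda>i::nat. if i = 1 then (0.5::real) else 0.5 - \<Delta> / 2)"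
  define E where "E = exp (\<Delta>\<^sup>2 * real ns / 16)"
  define k where "k = nat (floor E)"
  have E1: "E \<ge> 1" unfolding E_def using A by simp
  have kE: "real k \<le> E" unfolding k_def using E1 by linarith
  have f1: "floor E \<ge> 1" using E1 by linarith
  have f2: "real_of_int (floor E) > E - 1" by linarith
  have kf: "real k = real_of_int (floor E)" unfolding k_def using f1 by simp
  have kE2: "real k \<ge> E / 2" unfolding kf using f1 f2 by linarith
  have knb: "k \<le> nb" using kE A unfolding E_def by linarith
  have act: "ucb_action ns cs cb t = 1" if "1 \<le> t" "t \<le> k" for t
  proof -
    have "real t \<le> E" using that kE by linarith
    then have "ucb_history ns cs cb t = replicate t 1"
      using hist_ones[of \<Delta> t ns] A unfolding cs_def cb_def E_def by simp
    then show ?thesis unfolding ucb_action_def using that by simp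
  qed
  have nonneg: "cb i - cb 2 \<ge> 0" for i using A unfolding cb_def by simp
  have "(\<Sum>t=1..k. cb (ucb_action ns cs cb t) - cb 2) \<le> ucb_regret ns cs cb nb"
    unfolding ucb_regret_def
    by (rule sum_mono2) (use knb nonneg in auto)
  moreover have "(\<Sum>t=1..k. cb (ucb_action ns cs cb t) - cb 2) = real k * (\<Delta>/2)"
  proof -
    have "(\<Sum>t=1..k. cb (ucb_action ns cs cb t) - cb 2) = (\<Sum>t=1..k. \<Delta>/2)"
      by (rule sum.cong) (auto simp: act, simp add: cb_def)
    then show ?thesis by simp
  qed
  moreover have "real k * (\<Delta>/2) \<ge> 1/4 * \<Delta> * E"
    using kE2 A by (simp add: field_simps)
  ultimately show "1/4 * \<Delta> * exp (\<Delta>\<^sup>2 * real ns / 16) \<le> ucb_regret ns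
      (\<lambda>i. if i = 1 then 0.5 else 0.5 + \<Delta> / 2) (\<lambda>i. if i = 1 then 0.5 else 0.5 - \<Delta> / 2) nb"
    unfolding cs_def cb_def E_def by linarith
qed (simp)

end
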